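(* For every $n$, the set $\mathrm{Rect}^\ast(n)=\{(a^b): ab=n,\ a,b\ge 2\}$ of nontrivial rectangular partitions of $n$ is an independent set in the partition graph $G_n$; that is, no two distinct nontrivial rectangular partitions of $n$ are adjacent.
   Context: The partition graph $G_n$ has as vertices the integer partitions of $n$; two partitions are adjacent if one is obtained from the other by a single elementary unit transfer followed by reordering: decrease one part by $1$ and either increase a different part by $1$ or create a new part equal to $1$, then delete a part that became $0$ and sort in nonincreasing order (the result being different from the original). $(a^b)$ denotes the partition with $b$ parts all equal to $a$. *)

theory Defs
  imports Main
begin

text \<open>Partitions of n are represented as nonincreasing lists of positive naturals summing to n.\<close>

definition is_partition :: "nat \<Rightarrow> nat list \<Rightarrow> bool" where
  "is_partition n p \<longleftrightarrow> sorted (rev p) \<and> (\<forall>x\<in>set p. 0 < x) \<and> sum_list p = n"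

definition normalize :: "nat list \<Rightarrow> nat list" where
  "normalize q = rev (sort (filter (\<lambda>x. x \<noteq> 0) q))"

definition unit_transfer :: "nat list \<Rightarrow> nat list \<Rightarrow> bool" where
  "unit_transfer p q \<longleftrightarrow>
     (\<exists>i < length p. 0 < p ! i \<and>
        ((\<exists>j < length p. j \<noteq> i \<and> q = normalize ((p[i := p ! i - 1])[j := p ! j + 1]))
         \<or> q = normalize (p[i := p ! i - 1] @ [1])))"

definition adjacent :: "nat \<Rightarrow> nat list \<Rightarrow> nat list \<Rightarrow> bool" where
  "adjacent n p q \<longleftrightarrow> is_partition n p \<and> is_partition n q \<and> p \<noteq> q \<and>
     (unit_transfer p q \<or> unit_transfer q p)"

definition rect :: "nat \<Rightarrow> nat \<Rightarrow> nat list" where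
  "rect a b = replicate b a"

definition Rect_star :: "nat \<Rightarrow> nat list set" where
  "Rect_star n = {rect a b | a b. a * b = n \<and> 2 \<le> a \<and> 2 \<le> b}"

end

theory Submission
  imports Defs
begin

lemma set_normalize: "set (normalize q) = set q - {0}"
  unfolding normalize_def by auto

lemma transfer_two_vals:
  assumes "unit_transfer (replicate b a) q" "2 \<le> a" "2 \<le> b"
  shows "\<exists>x\<in>set q. \<exists>y\<in>set q. x \<noteq> y"
proof -
  let ?p = "replicate b a"
  obtain i where i: "i < b" and
    c: "(\<exists>j < b. j \<noteq> i \<and> q = normalize ((?p[i := ?p ! i - 1])[j := ?p ! j + 1]))
         \<or> q = normalize (?p[i := ?p ! i - 1] @ [1])"
    using assms(1) unfolding unit_transfer_def length_replicate by blast
  from c show ?thesis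
  proof
    assume "\<exists>j < b. j \<noteq> i \<and> q = normalize ((?p[i := ?p ! i - 1])[j := ?p ! j + 1])"
    then obtain j where j: "j < b" "j \<noteq> i"
      and q: "q = normalize ((?p[i := ?p ! i - 1])[j := ?p ! j + 1])" by auto
    let ?l = "(?p[i := ?p ! i - 1])[j := ?p ! j + 1]"
    have "?l ! i = a - 1" using i j by simp
    hence "a - 1 \<in> set ?l" using i by (metis length_list_update length_replicate nth_mem)
    moreover have "?l ! j = a + 1" using i j by simp
    hence "a + 1 \<in> set ?l" using j by (metis length_list_update length_replicate nth_mem)
    ultimately have "a - 1 \<in> set q" "a + 1 \<in> set q" using q assms(2) set_normalize[of ?l] by simp_all
    moreover have "a - 1 \<noteq> a + 1" using assms(2) by simp
    ultimately show ?thesis by blast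
  next
    assume q: "q = normalize (?p[i := ?p ! i - 1] @ [1])"
    let ?l = "?p[i := ?p ! i - 1] @ [1]"
    define k where "k = (if i = 0 then 1 else 0::nat)"
    have k: "k < b" "k \<noteq> i" using assms(3) k_def by auto
    have "?l ! k = a" using k i by (simp add: nth_append)
    hence "a \<in> set ?l" using k by (metis length_append length_list_update length_replicate nth_mem trans_less_add1)
    moreover have "1 \<in> set ?l" by simp
    ultimately have "a \<in> set q" "1 \<in> set q" using q assms(2) set_normalize[of ?l] by simp_all
    moreover have "a \<noteq> 1" using assms(2) by simp
    ultimately show ?thesis by blast
  qed
qed

theorem proposition3p5:
  fixes n :: nat
  shows "\<forall>p\<in>Rect_star n. \<forall>q\<in>Rect_star n. \<not> adjacent n p q"
proof (intro ballI notI)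
  fix p q assume p: "p \<in> Rect_star n" and q: "q \<in> Rect_star n" and adj: "adjacent n p q"
  obtain a b where pab: "p = replicate b a" "2 \<le> a" "2 \<le> b"
    using p unfolding Rect_star_def rect_def by auto
  obtain c d where qcd: "q = replicate d c" "2 \<le> c" "2 \<le> d"
    using q unfolding Rect_star_def rect_def by auto
  have "unit_transfer p q \<or> unit_transfer q p" using adj unfolding adjacent_def by auto
  then show False
  proof
    assume "unit_transfer p q"
    then obtain x y where "x \<in> set q" "y \<in> set q" "x \<noteq> y"
      using transfer_two_vals pab by blast
    thus False using qcd by simp
  next
    assume "unit_transfer q p"
    then obtain x y where "x \<in> set p" "y \<in> set p" "x \<noteq> y"
      using transfer_two_vals qcd by blast
    thus False using pab by simp
  qed
qed

end
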